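(* Let $U_1,U_2$ be two users at fixed positions $(x_1,y_1),(x_2,y_2)$ with distances $d_k=\sqrt{x_k^2+y_k^2}$ from a base station at the origin, $d_1<d_2$. Let the estimated positions be $(\hat x_k,\hat y_k)$ with $\hat x_k\sim\mathcal N(x_k,\sigma_{ob}^2)$, $\hat y_k\sim\mathcal N(y_k,\sigma_{ob}^2)$, all mutually independent, and $\hat d_k=\sqrt{\hat x_k^2+\hat y_k^2}$. Let the channel coefficients be $r_k=h_kd_k^{-\alpha/2}$ with path loss exponent $\alpha>0$ and $h_1,h_2$ i.i.d. $\mathcal{CN}(0,1)$ (Rayleigh fading), independent of the position estimates. Define the decoding order error probability $$P_e^2=\Pr\{\hat d_1<\hat d_2,\ |r_1|^2<|r_2|^2\}+\Pr\{\hat d_1>\hat d_2,\ |r_1|^2>|r_2|^2\}.$$ Then $$P_e^2=\frac{D-1}{D+1}P_e^1+\frac{1}{D+1},$$ where $D=d_2^\alpha/d_1^\alpha$ and $P_e^1=\Pr\{\hat d_1>\hat d_2\}$.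
   Context: $P_e^1=\Pr\{\hat d_1>\hat d_2\}$ is the probability that the estimated distances are in the wrong order (the fading-free decoding order error probability). *)

theory Defs
  imports "HOL-Probability.Probability"
begin

definition bs_dist :: "real \<Rightarrow> real \<Rightarrow> real" where
  "bs_dist x y = sqrt (x\<^sup>2 + y\<^sup>2)"

definition chan :: "real \<Rightarrow> real \<Rightarrow> complex \<Rightarrow> complex" where
  "chan \<alpha> d h = h * complex_of_real (d powr (- \<alpha> / 2))"

end

theory Submission
  imports Defs
begin

lemma disc_measure:
  assumes "(u::real) \<ge> 0"
  shows "emeasure lborel {p::real*real. (fst p)\<^sup>2 + (snd p)\<^sup>2 \<le> u} = ennreal (pi * u)"
proof -
  have "{p::real*real. (fst p)\<^sup>2 + (snd p)\<^sup>2 \<le> u} = cball 0 (sqrt u)"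
  proof (intro set_eqI)
    fix p :: "real*real"
    have "p \<in> cball 0 (sqrt u) \<longleftrightarrow> sqrt ((fst p)\<^sup>2 + (snd p)\<^sup>2) \<le> sqrt u"
      by (cases p) (simp add: norm_Pair)
    also have "\<dots> \<longleftrightarrow> (fst p)\<^sup>2 + (snd p)\<^sup>2 \<le> u" by simp
    finally show "p \<in> {p::real*real. (fst p)\<^sup>2 + (snd p)\<^sup>2 \<le> u} \<longleftrightarrow> p \<in> cball 0 (sqrt u)" by simp
  qed
  moreover have "emeasure lborel (cball (0::real*real) (sqrt u)) = ennreal (unit_ball_vol (DIM(real*real)) * sqrt u ^ DIM(real*real))"
    using assms by (intro emeasure_cball) simp
  ultimately show ?thesis using assms by (simp add: unit_ball_vol_2 mult.commute)
qed

lemma disc_measure':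
  "emeasure lborel {p::real*real. (fst p)\<^sup>2 + (snd p)\<^sup>2 \<le> u} = ennreal (pi * u)"
proof (cases "u \<ge> 0")
  case True then show ?thesis by (rule disc_measure)
next
  case False
  then have "{p::real*real. (fst p)\<^sup>2 + (snd p)\<^sup>2 \<le> u} = {}"
    by (auto intro: add_nonneg_nonneg) (smt (verit) zero_le_power2)
  then show ?thesis using False by (simp add: ennreal_neg mult_nonneg_nonpos)
qed

lemma layer_pt:
  assumes "(s::real) \<le> t"
  shows "ennreal (exp (-s)) = ennreal (exp (-t)) + (\<integral>\<^sup>+u. ennreal (exp (-u)) * indicator {s..t} u \<partial>lborel)"
proof -
  have "(\<integral>\<^sup>+u. ennreal (exp (-u)) * indicator {s..t} u \<partial>lborel) = ennreal ((- exp (-t)) - (- exp (-s)))"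
    using assms by (intro nn_integral_FTC_Icc) (auto intro!: derivative_eq_intros)
  then show ?thesis using assms
    by (simp add: ennreal_plus[symmetric] del: ennreal_plus)
qed

lemma gauss_disc:
  assumes t: "(t::real) \<ge> 0"
  shows "(\<integral>\<^sup>+p. indicator {p::real*real. (fst p)\<^sup>2 + (snd p)\<^sup>2 \<le> t} p * ennreal (exp (-((fst p)\<^sup>2 + (snd p)\<^sup>2))) \<partial>lborel)
    = ennreal (pi * (1 - exp (-t)))"
proof -
  define s where "s = (\<lambda>p::real*real. (fst p)\<^sup>2 + (snd p)\<^sup>2)"
  have s_nn: "s p \<ge> 0" for p unfolding s_def by simp
  have [measurable]: "s \<in> borel_measurable borel" unfolding s_def
    by (intro borel_measurable_continuous_onI continuous_intros)
  define C where "C = {p. s p \<le> t}"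
  have [measurable]: "C \<in> sets borel" unfolding C_def by measurable
  have P: "pair_sigma_finite (lborel::(real*real) measure) (lborel :: real measure)"
    by (intro pair_sigma_finite.intro) (simp_all add: lborel.sigma_finite_measure_axioms)
  have "(\<integral>\<^sup>+p. indicator C p * ennreal (exp (- s p)) \<partial>lborel)
     = (\<integral>\<^sup>+p. indicator C p * ennreal (exp (-t)) + (\<integral>\<^sup>+u. ennreal (exp (-u)) * indicator {(p,u). s p \<le> u \<and> u \<le> t} (p,u) \<partial>lborel) \<partial>lborel)"
  proof (intro nn_integral_cong)
    fix p :: "real*real"
    show "indicator C p * ennreal (exp (- s p)) = indicator C p * ennreal (exp (-t)) + (\<integral>\<^sup>+u. ennreal (exp (-u)) * indicator {(p,u). s p \<le> u \<and> u \<le> t} (p,u) \<partial>lborel)"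
    proof (cases "p \<in> C")
      case True
      then have "s p \<le> t" by (simp add: C_def)
      moreover have "(\<lambda>u. ennreal (exp (-u)) * indicator {(p,u). s p \<le> u \<and> u \<le> t} (p,u)) = (\<lambda>u. ennreal (exp (-u)) * indicator {s p..t} u)"
        by (auto simp: indicator_def fun_eq_iff)
      ultimately show ?thesis using True layer_pt[of "s p" t] by simp
    next
      case False
      then have "(\<lambda>u. ennreal (exp (-u)) * indicator {(p,u). s p \<le> u \<and> u \<le> t} (p,u)) = (\<lambda>u. 0)"
        by (auto simp: indicator_def fun_eq_iff C_def)
      then show ?thesis using False by simp
    qed
  qed
  also have "\<dots> = (\<integral>\<^sup>+p. indicator C p * ennreal (exp (-t)) \<partial>lborel) + (\<integral>\<^sup>+p. (\<integral>\<^sup>+u. ennreal (exp (-u)) * indicator {(p,u). s p \<le> u \<and> u \<le> t} (p,u) \<partial>lborel) \<partial>lborel)"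
    by (intro nn_integral_add) (measurable; fail)+
  also have "(\<integral>\<^sup>+p. indicator C p * ennreal (exp (-t)) \<partial>lborel) = ennreal (exp (-t)) * emeasure lborel C"
    using nn_integral_cmult_indicator[of C lborel "ennreal (exp (-t))"] by (simp add: mult.commute)
  also have "emeasure lborel C = ennreal (pi * t)"
    unfolding C_def s_def using disc_measure[OF t] by simp
  also have "(\<integral>\<^sup>+p. (\<integral>\<^sup>+u. ennreal (exp (-u)) * indicator {(p,u). s p \<le> u \<and> u \<le> t} (p,u) \<partial>lborel) \<partial>lborel)
      = (\<integral>\<^sup>+u. (\<integral>\<^sup>+p. ennreal (exp (-u)) * indicator {(p,u). s p \<le> u \<and> u \<le> t} (p,u) \<partial>lborel) \<partial>lborel)"
    by (rule pair_sigma_finite.Fubini'[OF P, symmetric]) measurable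
  also have "\<dots> = (\<integral>\<^sup>+u. ennreal (pi * (u * exp (-u))) * indicator {0..t} u \<partial>lborel)"
  proof (intro nn_integral_cong)
    fix u :: real
    have neg: "\<not> u \<ge> 0 \<Longrightarrow> ennreal (pi * u) = 0" by (intro ennreal_neg) (simp add: mult_nonneg_nonpos)
    have "(\<lambda>p. ennreal (exp (-u)) * indicator {(p,u). s p \<le> u \<and> u \<le> t} (p,u)) = (\<lambda>p. (ennreal (exp (-u)) * indicator {..t} u) * indicator {p. s p \<le> u} p)"
      by (auto simp: indicator_def fun_eq_iff)
    then have "(\<integral>\<^sup>+p. ennreal (exp (-u)) * indicator {(p,u). s p \<le> u \<and> u \<le> t} (p,u) \<partial>lborel)
       = (ennreal (exp (-u)) * indicator {..t} u) * emeasure lborel {p. s p \<le> u}"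
      by (simp add: nn_integral_cmult_indicator)
    also have "emeasure lborel {p. s p \<le> u} = ennreal (pi * u)"
      unfolding s_def by (rule disc_measure')
    finally show "(\<integral>\<^sup>+p. ennreal (exp (-u)) * indicator {(p,u). s p \<le> u \<and> u \<le> t} (p,u) \<partial>lborel) = ennreal (pi * (u * exp (-u))) * indicator {0..t} u"
      using neg by (cases "u \<ge> 0") (auto simp: indicator_def ennreal_mult'[symmetric] mult_ac)
  qed
  also have "\<dots> = ennreal pi * (\<integral>\<^sup>+u. ennreal (u * exp (-u)) * indicator {0..t} u \<partial>lborel)"
  proof (subst nn_integral_cmult[symmetric], measurable, intro nn_integral_cong)
    fix u :: real
    show "ennreal (pi * (u * exp (-u))) * indicator {0..t} u = ennreal pi * (ennreal (u * exp (-u)) * indicator {0..t} u)"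
      by (cases "u \<in> {0..t}") (simp_all add: ennreal_mult[symmetric])
  qed
  also have "(\<integral>\<^sup>+u. ennreal (u * exp (-u)) * indicator {0..t} u \<partial>lborel) = ennreal (1 - (t + 1) * exp (-t))"
  proof -
    have "(\<integral>\<^sup>+u. ennreal (u * exp (-u)) * indicator {0..t} u \<partial>lborel) = ennreal ((- (t + 1) * exp (-t)) - (- (0 + 1) * exp (-0)))"
      using t by (intro nn_integral_FTC_Icc) (auto intro!: derivative_eq_intros simp: algebra_simps)
    also have "(- (t + 1) * exp (-t)) - (- (0 + 1) * exp (-0)) = 1 - (t + 1) * exp (-t)" by (simp add: algebra_simps)
    finally show ?thesis .
  qed
  finally have eq: "(\<integral>\<^sup>+p. indicator C p * ennreal (exp (- s p)) \<partial>lborel) = 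
     ennreal (exp (-t)) * ennreal (pi * t) + ennreal pi * ennreal (1 - (t + 1) * exp (-t))" .
  have "exp t \<ge> 1 + t" by (rule exp_ge_add_one_self)
  then have "(t + 1) * exp (-t) \<le> 1" by (simp add: exp_minus field_simps)
  then have "ennreal (exp (-t)) * ennreal (pi * t) + ennreal pi * ennreal (1 - (t + 1) * exp (-t))
     = ennreal (pi * (1 - exp (-t)))"
  proof -
    have B: "0 \<le> 1 - (t + 1) * exp (-t)" using \<open>(t + 1) * exp (-t) \<le> 1\<close> by simp
    have "ennreal (exp (-t)) * ennreal (pi * t) = ennreal (pi * t * exp (-t))"
      using t by (simp add: ennreal_mult[symmetric] mult_ac)
    moreover have "ennreal pi * ennreal (1 - (t + 1) * exp (-t)) = ennreal (pi * (1 - (t + 1) * exp (-t)))"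
      using B by (simp add: ennreal_mult[symmetric])
    moreover have "ennreal (pi * t * exp (-t)) + ennreal (pi * (1 - (t + 1) * exp (-t))) = ennreal (pi * t * exp (-t) + pi * (1 - (t + 1) * exp (-t)))"
      using B t by (intro ennreal_plus[symmetric]) auto
    moreover have "pi * t * exp (-t) + pi * (1 - (t + 1) * exp (-t)) = pi * (1 - exp (-t))"
      by (simp add: algebra_simps)
    ultimately show ?thesis by simp
  qed
  with eq show ?thesis by (simp add: C_def s_def indicator_def)
qed


context prob_space
begin

lemma indep_var_swap:
  assumes "indep_var Ma A Mb B" shows "indep_var Mb B Ma A"
proof -
  define SA where "SA = sigma_sets (space M) { A -` X \<inter> space M | X. X \<in> sets Ma}"
  define SB where "SB = sigma_sets (space M) { B -` X \<inter> space M | X. X \<in> sets Mb}"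
  have r: "random_variable Ma A" "random_variable Mb B" and I: "indep_set SA SB"
    using assms by (simp_all add: indep_var_eq SA_def SB_def)
  then have e: "SA \<subseteq> events" "SB \<subseteq> events" and p: "\<forall>a\<in>SA. \<forall>b\<in>SB. prob (a \<inter> b) = prob a * prob b"
    by (simp_all add: indep_sets2_eq)
  have "\<forall>a\<in>SB. \<forall>b\<in>SA. prob (a \<inter> b) = prob a * prob b"
  proof (intro ballI)
    fix a b assume "a \<in> SB" "b \<in> SA"
    then have "prob (b \<inter> a) = prob b * prob a" using p by blast
    then show "prob (a \<inter> b) = prob a * prob b" by (simp add: Int_commute mult.commute)
  qed
  with e have "indep_set SB SA" by (simp add: indep_sets2_eq)
  with r show ?thesis by (simp add: indep_var_eq SA_def SB_def)
qed

lemma indep_var_events: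
  assumes ind: "indep_var Ma A Mb B" and SA: "SA \<in> sets Ma" and SB: "SB \<in> sets Mb"
  shows "prob {\<omega>\<in>space M. A \<omega> \<in> SA \<and> B \<omega> \<in> SB} = prob {\<omega>\<in>space M. A \<omega> \<in> SA} * prob {\<omega>\<in>space M. B \<omega> \<in> SB}"
proof -
  have "prob {\<omega>\<in>space M. A \<omega> \<in> SA \<and> B \<omega> \<in> SB} = prob ((\<lambda>x. (A x, B x)) -` (SA \<times> SB) \<inter> space M)"
    by (auto intro!: arg_cong[where f=prob])
  also have "\<dots> = prob (A -` SA \<inter> space M) * prob (B -` SB \<inter> space M)"
    by (rule indep_varD[OF ind SA SB])
  also have "A -` SA \<inter> space M = {\<omega>\<in>space M. A \<omega> \<in> SA}" by auto
  also have "B -` SB \<inter> space M = {\<omega>\<in>space M. B \<omega> \<in> SB}" by auto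
  finally show ?thesis .
qed

lemma null_tie:
  fixes X :: "'a \<Rightarrow> real"
  assumes ind: "indep_var borel X N Y" and X: "distributed M lborel X f"
    and S: "S \<in> sets (borel \<Otimes>\<^sub>M N)"
    and fin: "\<And>y. y \<in> space N \<Longrightarrow> finite {x. (x, y) \<in> S}"
  shows "prob {\<omega>\<in>space M. (X \<omega>, Y \<omega>) \<in> S} = 0"
proof -
  have rv: "random_variable borel X" "random_variable N Y"
    using ind by (simp_all add: indep_var_rv1 indep_var_rv2)
  have eq: "distr M borel X \<Otimes>\<^sub>M distr M N Y = distr M (borel \<Otimes>\<^sub>M N) (\<lambda>x. (X x, Y x))"
    using ind by (simp add: indep_var_distribution_eq)
  interpret DX: prob_space "distr M borel X" using rv by (intro prob_space_distr) simp
  interpret DY: prob_space "distr M N Y" using rv by (intro prob_space_distr) simp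
  interpret DXY: pair_sigma_finite "distr M borel X" "distr M N Y" ..
  have dX: "distr M borel X = density lborel f"
    using distributed_distr_eq_density[OF X] by (metis distr_cong sets_lborel)
  have "emeasure M {\<omega>\<in>space M. (X \<omega>, Y \<omega>) \<in> S} = emeasure (distr M (borel \<Otimes>\<^sub>M N) (\<lambda>x. (X x, Y x))) S"
    using S rv by (subst emeasure_distr) (auto intro!: arg_cong[where f="emeasure M"])
  also have "\<dots> = emeasure (distr M borel X \<Otimes>\<^sub>M distr M N Y) S" by (simp add: eq)
  also have "\<dots> = (\<integral>\<^sup>+y. emeasure (distr M borel X) ((\<lambda>x. (x, y)) -` S) \<partial>distr M N Y)"
    using S by (intro DXY.emeasure_pair_measure_alt2) (simp add: eq)
  also have "\<dots> = (\<integral>\<^sup>+y. 0 \<partial>distr M N Y)"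
  proof (intro nn_integral_cong)
    fix y assume y: "y \<in> space (distr M N Y)"
    have "(\<lambda>x. (x, y)) -` S \<inter> space borel \<in> sets borel"
      using y S by (intro measurable_sets[OF measurable_Pair2']) auto
    then have "(\<lambda>x. (x, y)) -` S \<in> sets borel" by simp
    then have "emeasure (density lborel f) ((\<lambda>x. (x, y)) -` S) = (\<integral>\<^sup>+x. f x * indicator ((\<lambda>x. (x, y)) -` S) x \<partial>lborel)"
      using X by (intro emeasure_density) (auto simp: distributed_def)
    also have "\<dots> = 0"
      using y fin[of y] by (intro nn_integral_null_set finite_imp_null_set_lborel) (auto simp: vimage_def)
    finally show "emeasure (distr M borel X) ((\<lambda>x. (x, y)) -` S) = 0" by (simp add: dX)
  qed
  finally show ?thesis by (simp add: measure_def)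
qed

lemma sq_sum_exponential:
  assumes A: "distributed M lborel A (normal_density 0 (sqrt (1/2)))"
    and B: "distributed M lborel B (normal_density 0 (sqrt (1/2)))"
    and ind: "indep_var borel A borel B"
  shows "distributed M lborel (\<lambda>\<omega>. (A \<omega>)\<^sup>2 + (B \<omega>)\<^sup>2) (exponential_density 1)"
proof -
  have [measurable]: "A \<in> borel_measurable M" "B \<in> borel_measurable M"
    using distributed_measurable[OF A] distributed_measurable[OF B] by simp_all
  have key: "emeasure M {x\<in>space M. (A x)\<^sup>2 + (B x)\<^sup>2 \<le> t} = ennreal (1 - exp (- t * 1))" if t: "0 \<le> t" for t
  proof -
  have eq: "distr M lborel A \<Otimes>\<^sub>M distr M lborel B = distr M (lborel \<Otimes>\<^sub>M lborel) (\<lambda>x. (A x, B x))"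
  proof -
    have "distr M borel A \<Otimes>\<^sub>M distr M borel B = distr M (borel \<Otimes>\<^sub>M borel) (\<lambda>x. (A x, B x))"
      using ind by (simp add: indep_var_distribution_eq)
    moreover have "distr M borel A = distr M lborel A" "distr M borel B = distr M lborel B"
      by (auto intro!: distr_cong)
    moreover have "distr M (borel \<Otimes>\<^sub>M borel) (\<lambda>x. (A x, B x)) = distr M (lborel \<Otimes>\<^sub>M lborel) (\<lambda>x. (A x, B x))"
      by (intro distr_cong sets_pair_measure_cong) auto
    ultimately show ?thesis by simp
  qed
  have J: "distributed M (lborel \<Otimes>\<^sub>M lborel) (\<lambda>x. (A x, B x))
      (\<lambda>(x, y). ennreal (normal_density 0 (sqrt (1/2)) x) * ennreal (normal_density 0 (sqrt (1/2)) y))"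
    by (rule distributed_joint_indep'[OF _ _ A B eq]) (simp_all add: lborel.sigma_finite_measure_axioms)
  define C where "C = {p::real*real. (fst p)\<^sup>2 + (snd p)\<^sup>2 \<le> t}"
  have "{p\<in>space (lborel \<Otimes>\<^sub>M lborel). (fst p)\<^sup>2 + (snd p)\<^sup>2 \<le> t} \<in> sets (lborel \<Otimes>\<^sub>M lborel)"
    by measurable
  then have Cb: "C \<in> sets (lborel \<Otimes>\<^sub>M lborel)" by (simp add: C_def space_pair_measure)
  have nd: "normal_density 0 (sqrt (1/2)) x = exp (- x\<^sup>2) / sqrt pi" for x
    by (simp add: normal_density_def)
  have "emeasure M {x\<in>space M. (A x)\<^sup>2 + (B x)\<^sup>2 \<le> t} = emeasure M ((\<lambda>x. (A x, B x)) -` C \<inter> space M)"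
    by (auto simp: C_def intro!: arg_cong[where f="emeasure M"])
  also have "\<dots> = (\<integral>\<^sup>+p. (case p of (x, y) \<Rightarrow> ennreal (normal_density 0 (sqrt (1/2)) x) * ennreal (normal_density 0 (sqrt (1/2)) y)) * indicator C p \<partial>(lborel \<Otimes>\<^sub>M lborel))"
    by (rule distributed_emeasure[OF J Cb])
  also have "\<dots> = (\<integral>\<^sup>+p. ennreal (1/pi) * (indicator C p * ennreal (exp (-((fst p)\<^sup>2 + (snd p)\<^sup>2)))) \<partial>lborel)"
    unfolding lborel_prod
  proof (intro nn_integral_cong)
    fix p :: "real*real"
    obtain x y where p: "p = (x, y)" by (cases p)
    have "exp (- x\<^sup>2) / sqrt pi * (exp (- y\<^sup>2) / sqrt pi) = 1/pi * exp (-(x\<^sup>2 + y\<^sup>2))"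
      by (simp add: exp_add[symmetric] exp_minus field_simps)
    then show "(case p of (x, y) \<Rightarrow> ennreal (normal_density 0 (sqrt (1/2)) x) * ennreal (normal_density 0 (sqrt (1/2)) y)) * indicator C p
      = ennreal (1/pi) * (indicator C p * ennreal (exp (-((fst p)\<^sup>2 + (snd p)\<^sup>2))))"
      by (simp add: p nd ennreal_mult[symmetric] mult_ac indicator_def)
  qed
  also have "\<dots> = ennreal (1/pi) * (\<integral>\<^sup>+p. indicator C p * ennreal (exp (-((fst p)\<^sup>2 + (snd p)\<^sup>2))) \<partial>lborel)"
  proof (rule nn_integral_cmult)
    have Cb': "C \<in> sets borel" using Cb unfolding lborel_prod by simp
    have g: "(\<lambda>p::real*real. exp (-((fst p)\<^sup>2 + (snd p)\<^sup>2))) \<in> borel_measurable borel"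
      by (intro borel_measurable_continuous_onI continuous_intros)
    show "(\<lambda>p. indicator C p * ennreal (exp (-((fst p)\<^sup>2 + (snd p)\<^sup>2)))) \<in> borel_measurable lborel"
      using Cb' g by simp
  qed
  also have "(\<integral>\<^sup>+p. indicator C p * ennreal (exp (-((fst p)\<^sup>2 + (snd p)\<^sup>2))) \<partial>lborel) = ennreal (pi * (1 - exp (-t)))"
    unfolding C_def by (rule gauss_disc[OF t])
  also have "ennreal (1/pi) * ennreal (pi * (1 - exp (-t))) = ennreal (1 - exp (- t * 1))"
    using t by (simp add: ennreal_mult[symmetric])
  finally show ?thesis .
  qed
  show ?thesis
    by (rule exponential_distributedI) (use key in \<open>auto simp: ennreal_minus ennreal_1[symmetric] simp del: ennreal_1\<close>)
qed

lemma exp_density_int1: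
  assumes "0 < l" shows "(\<integral>\<^sup>+x. ennreal (exponential_density l x) \<partial>lborel) = 1"
proof -
  interpret P: prob_space "density lborel (exponential_density l)"
    using assms by (rule prob_space_exponential_density)
  have "emeasure (density lborel (exponential_density l)) UNIV = 1"
    using P.emeasure_space_1 by simp
  then show ?thesis
    by (subst (asm) emeasure_density) auto
qed

lemma exp_race:
  assumes X: "distributed M lborel X (exponential_density 1)"
    and Y: "distributed M lborel Y (exponential_density 1)"
    and ind: "indep_var borel X borel Y" and c1: "0 \<le> c1" and c2: "0 < c2"
  shows "prob {\<omega>\<in>space M. c1 * X \<omega> < c2 * Y \<omega>} = c2 / (c1 + c2)"
proof -
  have rv[measurable]: "X \<in> borel_measurable M" "Y \<in> borel_measurable M"
    using ind by (simp_all add: indep_var_rv1 indep_var_rv2)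
  have eq: "distr M borel X \<Otimes>\<^sub>M distr M borel Y = distr M (borel \<Otimes>\<^sub>M borel) (\<lambda>x. (X x, Y x))"
    using ind by (simp add: indep_var_distribution_eq)
  interpret DY: prob_space "distr M borel Y" using rv by (intro prob_space_distr) simp
  have dX: "distr M borel X = density lborel (exponential_density 1)"
    using distributed_distr_eq_density[OF X] by (metis distr_cong sets_lborel)
  define S where "S = {p\<in>space (borel \<Otimes>\<^sub>M borel). c1 * fst p < c2 * (snd p :: real)}"
  have S[measurable]: "S \<in> sets (borel \<Otimes>\<^sub>M borel)" unfolding S_def by measurable
  have "emeasure M {\<omega>\<in>space M. c1 * X \<omega> < c2 * Y \<omega>} = emeasure (distr M (borel \<Otimes>\<^sub>M borel) (\<lambda>x. (X x, Y x))) S"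
    using S by (subst emeasure_distr) (auto simp: S_def space_pair_measure intro!: arg_cong[where f="emeasure M"])
  also have "\<dots> = emeasure (distr M borel X \<Otimes>\<^sub>M distr M borel Y) S" by (simp add: eq)
  also have "\<dots> = (\<integral>\<^sup>+x. emeasure (distr M borel Y) (Pair x -` S) \<partial>distr M borel X)"
    using S by (intro DY.emeasure_pair_measure_alt) (simp add: eq)
  also have "\<dots> = (\<integral>\<^sup>+x. ennreal (exp (- (c1 * x / c2))) \<partial>density lborel (exponential_density 1))"
    unfolding dX[symmetric]
  proof (rule nn_integral_cong_AE)
    have "AE x in density lborel (exponential_density 1). 0 \<le> x"
      by (subst AE_density) (auto simp: exponential_density_def)
    then show "AE x in distr M borel X. emeasure (distr M borel Y) (Pair x -` S) = ennreal (exp (- (c1 * x / c2)))"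
      unfolding dX
    proof (rule AE_mp, intro AE_I2 impI)
      fix x :: real assume x: "0 \<le> x"
      have "emeasure (distr M borel Y) (Pair x -` S) = emeasure M (Y -` (Pair x -` S) \<inter> space M)"
        using S by (intro emeasure_distr) (auto intro!: measurable_sets[OF measurable_Pair1'])
      also have "Y -` (Pair x -` S) \<inter> space M = {\<omega>\<in>space M. c1 * x / c2 < Y \<omega>}"
        using c2 by (auto simp: S_def space_pair_measure field_simps)
      also have "emeasure M \<dots> = ennreal (prob {\<omega>\<in>space M. c1 * x / c2 < Y \<omega>})"
        by (simp add: emeasure_eq_measure)
      also have "prob {\<omega>\<in>space M. c1 * x / c2 < Y \<omega>} = exp (- (c1 * x / c2) * 1)"
        using x c1 c2 by (intro exponential_distributedD_gt[OF Y]) auto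
      finally show "emeasure (distr M borel Y) (Pair x -` S) = ennreal (exp (- (c1 * x / c2)))" by simp
    qed
  qed
  also have "\<dots> = (\<integral>\<^sup>+x. ennreal (exponential_density 1 x) * ennreal (exp (- (c1 * x / c2))) \<partial>lborel)"
    by (rule nn_integral_density) auto
  also have "\<dots> = (\<integral>\<^sup>+x. ennreal (c2 / (c1 + c2)) * ennreal (exponential_density ((c1 + c2) / c2) x) \<partial>lborel)"
  proof (intro nn_integral_cong)
    fix x :: real
    show "ennreal (exponential_density 1 x) * ennreal (exp (- (c1 * x / c2))) = ennreal (c2 / (c1 + c2)) * ennreal (exponential_density ((c1 + c2) / c2) x)"
    proof (cases "x < 0")
      case True then show ?thesis by (simp add: exponential_density_def)
    next
      case False
      have "exp (- x) * exp (- (c1 * x / c2)) = c2 / (c1 + c2) * ((c1 + c2) / c2 * exp (- x * ((c1 + c2) / c2)))"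
      proof -
        have e: "exp (- x) * exp (- (c1 * x / c2)) = exp (- x * ((c1 + c2) / c2))"
          unfolding exp_add[symmetric] using c2 by (simp add: field_simps)
        have k: "c2 / (c1 + c2) * ((c1 + c2) / c2) = 1" using c1 c2 by simp
        show ?thesis unfolding e mult.assoc[symmetric] k by simp
      qed
      then show ?thesis using False c1 c2
        by (simp add: exponential_density_def ennreal_mult[symmetric])
    qed
  qed
  also have "\<dots> = ennreal (c2 / (c1 + c2)) * (\<integral>\<^sup>+x. ennreal (exponential_density ((c1 + c2) / c2) x) \<partial>lborel)"
    by (rule nn_integral_cmult) auto
  also have "\<dots> = ennreal (c2 / (c1 + c2))"
    using c1 c2 by (simp add: exp_density_int1)
  finally show ?thesis using c1 c2 by (simp add: emeasure_eq_measure)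
qed

lemma exp_race2:
  assumes X: "distributed M lborel X (exponential_density 1)"
    and Y: "distributed M lborel Y (exponential_density 1)"
    and ind: "indep_var borel X borel Y" and c1: "0 \<le> c1" and c2: "0 < c2"
  shows "prob {\<omega>\<in>space M. c1 * X \<omega> > c2 * Y \<omega>} = c1 / (c1 + c2)"
proof (cases "c1 = 0")
  case False
  then have "prob {\<omega>\<in>space M. c2 * Y \<omega> < c1 * X \<omega>} = c1 / (c2 + c1)"
    using c1 c2 by (intro exp_race[OF Y X indep_var_swap[OF ind]]) auto
  then show ?thesis by (simp add: add.commute)
next
  case True
  have rv[measurable]: "Y \<in> borel_measurable M"
    using ind by (simp_all add: indep_var_rv1 indep_var_rv2)
  have "prob {\<omega>\<in>space M. c1 * X \<omega> > c2 * Y \<omega>} \<le> prob {\<omega>\<in>space M. Y \<omega> \<le> 0}"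
    using True c2 by (intro finite_measure_mono) (auto simp: mult_less_0_iff)
  also have "\<dots> = 1 - exp (- 0 * 1)"
    by (rule exponential_distributedD_le[OF Y]) auto
  finally show ?thesis using True by (simp add: measure_le_0_iff)
qed

lemma indep_group:
  assumes ind: "indep_vars M' Xs I" and AB: "A \<inter> B = {}" "A \<subseteq> I" "B \<subseteq> I"
    and f: "f \<in> measurable (PiM A M') N1" and g: "g \<in> measurable (PiM B M') N2"
    and F: "\<And>\<omega>. F \<omega> = f (restrict (\<lambda>i. Xs i \<omega>) A)"
    and G: "\<And>\<omega>. G \<omega> = g (restrict (\<lambda>i. Xs i \<omega>) B)"
  shows "indep_var N1 F N2 G"
proof -
  have "indep_var N1 (f \<circ> (\<lambda>\<omega>. restrict (\<lambda>i. Xs i \<omega>) A)) N2 (g \<circ> (\<lambda>\<omega>. restrict (\<lambda>i. Xs i \<omega>) B))"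
    by (rule indep_var_compose[OF indep_var_restrict[OF ind AB] f g])
  moreover have "f \<circ> (\<lambda>\<omega>. restrict (\<lambda>i. Xs i \<omega>) A) = F" "g \<circ> (\<lambda>\<omega>. restrict (\<lambda>i. Xs i \<omega>) B) = G"
    using F G by (auto simp: fun_eq_iff)
  ultimately show ?thesis by simp
qed

end

lemma alg:
  fixes c1 c2 p :: real
  assumes c1: "0 \<le> c1" and c2: "0 < c2"
  shows "(1 - p) * (c2 / (c1 + c2)) + p * (c1 / (c1 + c2)) = (c1 / c2 - 1) / (c1 / c2 + 1) * p + 1 / (c1 / c2 + 1)"
proof -
  have cc: "0 < c1 + c2" using c1 c2 by simp
  have e1: "c1/c2 - 1 = (c1-c2)/c2" using c2 by (simp add: field_simps)
  have e2: "c1/c2 + 1 = (c1+c2)/c2" using c2 by (simp add: field_simps)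
  have h1: "(c1/c2 - 1)/(c1/c2+1) = (c1-c2)/(c1+c2)" unfolding e1 e2 using c2 cc by simp
  have h2: "1/(c1/c2+1) = c2/(c1+c2)" unfolding e2 using c2 cc by simp
  show ?thesis unfolding h1 h2 using cc by (simp add: field_simps)
qed

lemma finite_sq_eq: "finite {x::real. x\<^sup>2 = y}"
proof (rule finite_subset)
  show "{x::real. x\<^sup>2 = y} \<subseteq> {sqrt y, - sqrt y}"
  proof
    fix x :: real assume "x \<in> {x. x\<^sup>2 = y}"
    then have "sqrt y = \<bar>x\<bar>" by auto
    then show "x \<in> {sqrt y, - sqrt y}" by (cases "x \<ge> 0") auto
  qed
qed simp

lemma chan_sq:
  assumes "0 \<le> d"
  shows "(cmod (chan \<alpha> d (Complex a b)))\<^sup>2 = d powr (-\<alpha>) * (a\<^sup>2 + b\<^sup>2)"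
proof -
  have "(cmod (chan \<alpha> d (Complex a b)))\<^sup>2 = (cmod (Complex a b))\<^sup>2 * (d powr (-\<alpha>/2))\<^sup>2"
    by (simp add: chan_def norm_mult power_mult_distrib)
  also have "(d powr (-\<alpha>/2))\<^sup>2 = d powr (-\<alpha>)"
    by (simp add: power2_eq_square powr_add[symmetric])
  also have "(cmod (Complex a b))\<^sup>2 = a\<^sup>2 + b\<^sup>2"
    by (simp add: cmod_power2)
  finally show ?thesis by simp
qed

theorem corollary1:
  fixes M :: "'a measure"
    and x1 y1 x2 y2 \<sigma> \<alpha> :: real
    and xh1 yh1 xh2 yh2 a1 b1 a2 b2 :: "'a \<Rightarrow> real"
  assumes "prob_space M"
    and "\<sigma> > 0" and "\<alpha> > 0"
    and "bs_dist x1 y1 < bs_dist x2 y2"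
    and "distributed M lborel xh1 (normal_density x1 \<sigma>)"
    and "distributed M lborel yh1 (normal_density y1 \<sigma>)"
    and "distributed M lborel xh2 (normal_density x2 \<sigma>)"
    and "distributed M lborel yh2 (normal_density y2 \<sigma>)"
    and "distributed M lborel a1 (normal_density 0 (sqrt (1/2)))"
    and "distributed M lborel b1 (normal_density 0 (sqrt (1/2)))"
    and "distributed M lborel a2 (normal_density 0 (sqrt (1/2)))"
    and "distributed M lborel b2 (normal_density 0 (sqrt (1/2)))"
    and "prob_space.indep_vars M (\<lambda>_. borel)
           (\<lambda>i. [xh1, yh1, xh2, yh2, a1, b1, a2, b2] ! i) {0..<8}"
  shows "(let d1 = bs_dist x1 y1; d2 = bs_dist x2 y2;
             dh1 = (\<lambda>\<omega>. bs_dist (xh1 \<omega>) (yh1 \<omega>));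
             dh2 = (\<lambda>\<omega>. bs_dist (xh2 \<omega>) (yh2 \<omega>));
             r1 = (\<lambda>\<omega>. chan \<alpha> d1 (Complex (a1 \<omega>) (b1 \<omega>)));
             r2 = (\<lambda>\<omega>. chan \<alpha> d2 (Complex (a2 \<omega>) (b2 \<omega>)));
             D = d2 powr \<alpha> / d1 powr \<alpha>;
             Pe1 = measure M {\<omega> \<in> space M. dh1 \<omega> > dh2 \<omega>};
             Pe2 = measure M {\<omega> \<in> space M. dh1 \<omega> < dh2 \<omega> \<and> (cmod (r1 \<omega>))\<^sup>2 < (cmod (r2 \<omega>))\<^sup>2}
                 + measure M {\<omega> \<in> space M. dh1 \<omega> > dh2 \<omega> \<and> (cmod (r1 \<omega>))\<^sup>2 > (cmod (r2 \<omega>))\<^sup>2}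
         in Pe2 = (D - 1) / (D + 1) * Pe1 + 1 / (D + 1))"
proof -
  interpret prob_space M by (rule assms(1))
  define Xs where "Xs = (\<lambda>i::nat. [xh1, yh1, xh2, yh2, a1, b1, a2, b2] ! i)"
  have ind: "indep_vars (\<lambda>_. borel) Xs {0..<8}" using assms(13) by (simp add: Xs_def)
  have [measurable]: "xh1 \<in> borel_measurable M" "yh1 \<in> borel_measurable M"
    "xh2 \<in> borel_measurable M" "yh2 \<in> borel_measurable M"
    "a1 \<in> borel_measurable M" "b1 \<in> borel_measurable M"
    "a2 \<in> borel_measurable M" "b2 \<in> borel_measurable M"
    using distributed_measurable[OF assms(5)] distributed_measurable[OF assms(6)]
      distributed_measurable[OF assms(7)] distributed_measurable[OF assms(8)]
      distributed_measurable[OF assms(9)] distributed_measurable[OF assms(10)]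
      distributed_measurable[OF assms(11)] distributed_measurable[OF assms(12)]
    by simp_all
  define d1 where "d1 = bs_dist x1 y1"
  define d2 where "d2 = bs_dist x2 y2"
  have d1: "0 \<le> d1" by (simp add: d1_def bs_dist_def)
  have d2: "0 < d2" using assms(4) d1 by (simp add: d1_def d2_def)
  define c1 where "c1 = d1 powr (-\<alpha>)"
  define c2 where "c2 = d2 powr (-\<alpha>)"
  have c1: "0 \<le> c1" by (simp add: c1_def)
  have c2: "0 < c2" using d2 by (simp add: c2_def)
  define D where "D = d2 powr \<alpha> / d1 powr \<alpha>"
  have D: "D = c1 / c2"
  proof (cases "d1 = 0")
    case True then show ?thesis by (simp add: D_def c1_def)
  next
    case False
    then show ?thesis using d1 d2
      by (simp add: D_def c1_def c2_def powr_minus divide_inverse mult.commute)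
  qed
  have Dnn: "0 \<le> D" unfolding D using c1 c2 by simp
  define E1 where "E1 = (\<lambda>\<omega>. (a1 \<omega>)\<^sup>2 + (b1 \<omega>)\<^sup>2)"
  define E2 where "E2 = (\<lambda>\<omega>. (a2 \<omega>)\<^sup>2 + (b2 \<omega>)\<^sup>2)"
  define dh1 where "dh1 = (\<lambda>\<omega>. bs_dist (xh1 \<omega>) (yh1 \<omega>))"
  define dh2 where "dh2 = (\<lambda>\<omega>. bs_dist (xh2 \<omega>) (yh2 \<omega>))"
  have r1: "(cmod (chan \<alpha> d1 (Complex (a1 \<omega>) (b1 \<omega>))))\<^sup>2 = c1 * E1 \<omega>" for \<omega>
    using d1 by (simp add: chan_sq c1_def E1_def)
  have r2: "(cmod (chan \<alpha> d2 (Complex (a2 \<omega>) (b2 \<omega>))))\<^sup>2 = c2 * E2 \<omega>" for \<omega>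
    using d2 by (simp add: chan_sq c2_def E2_def)

  have ind_a1b1: "indep_var borel a1 borel b1"
    by (rule indep_group[OF ind, of "{4}" "{5}" "\<lambda>v. v 4" _ "\<lambda>v. v 5"]) (auto simp: Xs_def)
  have ind_a2b2: "indep_var borel a2 borel b2"
    by (rule indep_group[OF ind, of "{6}" "{7}" "\<lambda>v. v 6" _ "\<lambda>v. v 7"]) (auto simp: Xs_def)
  have ind_E: "indep_var borel E1 borel E2"
    by (rule indep_group[OF ind, of "{4,5}" "{6,7}" "\<lambda>v. (v 4)\<^sup>2 + (v 5)\<^sup>2" _ "\<lambda>v. (v 6)\<^sup>2 + (v 7)\<^sup>2"])
      (auto simp: Xs_def E1_def E2_def)
  have ind_tie: "indep_var borel xh1 borel (\<lambda>\<omega>. (xh2 \<omega>)\<^sup>2 + (yh2 \<omega>)\<^sup>2 - (yh1 \<omega>)\<^sup>2)"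
    by (rule indep_group[OF ind, of "{0}" "{1,2,3}" "\<lambda>v. v 0" _ "\<lambda>v. (v 2)\<^sup>2 + (v 3)\<^sup>2 - (v 1)\<^sup>2"])
      (auto simp: Xs_def)
  have ind_PF: "indep_var (borel \<Otimes>\<^sub>M borel) (\<lambda>\<omega>. (dh1 \<omega>, dh2 \<omega>)) (borel \<Otimes>\<^sub>M borel) (\<lambda>\<omega>. (E1 \<omega>, E2 \<omega>))"
    by (rule indep_group[OF ind, of "{0..<4}" "{4..<8}"
          "\<lambda>v. (sqrt ((v 0)\<^sup>2 + (v 1)\<^sup>2), sqrt ((v 2)\<^sup>2 + (v 3)\<^sup>2))" _
          "\<lambda>v. ((v 4)\<^sup>2 + (v 5)\<^sup>2, (v 6)\<^sup>2 + (v 7)\<^sup>2)"])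
      (auto simp: Xs_def E1_def E2_def dh1_def dh2_def bs_dist_def)
  have E1exp: "distributed M lborel E1 (exponential_density 1)"
    unfolding E1_def by (rule sq_sum_exponential[OF assms(9) assms(10) ind_a1b1])
  have E2exp: "distributed M lborel E2 (exponential_density 1)"
    unfolding E2_def by (rule sq_sum_exponential[OF assms(11) assms(12) ind_a2b2])
  have fadeLT: "prob {\<omega>\<in>space M. c1 * E1 \<omega> < c2 * E2 \<omega>} = c2 / (c1 + c2)"
    by (rule exp_race[OF E1exp E2exp ind_E c1 c2])
  have fadeGT: "prob {\<omega>\<in>space M. c1 * E1 \<omega> > c2 * E2 \<omega>} = c1 / (c1 + c2)"
    by (rule exp_race2[OF E1exp E2exp ind_E c1 c2])
  have [measurable]: "dh1 \<in> borel_measurable M" "dh2 \<in> borel_measurable M"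
    "E1 \<in> borel_measurable M" "E2 \<in> borel_measurable M"
    unfolding dh1_def dh2_def E1_def E2_def bs_dist_def by measurable
  have tie: "prob {\<omega>\<in>space M. dh1 \<omega> = dh2 \<omega>} = 0"
  proof -
    have "{\<omega>\<in>space M. dh1 \<omega> = dh2 \<omega>} = {\<omega>\<in>space M. (xh1 \<omega>, (xh2 \<omega>)\<^sup>2 + (yh2 \<omega>)\<^sup>2 - (yh1 \<omega>)\<^sup>2)
        \<in> {p\<in>space (borel \<Otimes>\<^sub>M borel). (fst p)\<^sup>2 = snd p}}"
      by (auto simp: dh1_def dh2_def bs_dist_def space_pair_measure)
    also have "prob \<dots> = 0"
    proof (rule null_tie[OF ind_tie assms(5)])
      show "{p\<in>space (borel \<Otimes>\<^sub>M borel). (fst p)\<^sup>2 = (snd p :: real)} \<in> sets (borel \<Otimes>\<^sub>M borel)"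
        by measurable
      fix y :: real
      show "finite {x. (x, y) \<in> {p\<in>space (borel \<Otimes>\<^sub>M borel). (fst p)\<^sup>2 = snd p}}"
        using finite_sq_eq[of y] by (simp add: space_pair_measure)
    qed
    finally show ?thesis .
  qed
  have PLG: "prob {\<omega>\<in>space M. dh1 \<omega> < dh2 \<omega>} = 1 - prob {\<omega>\<in>space M. dh1 \<omega> > dh2 \<omega>}"
  proof -
    have "prob ({\<omega>\<in>space M. dh1 \<omega> < dh2 \<omega>} \<union> {\<omega>\<in>space M. dh1 \<omega> > dh2 \<omega>})
        = prob {\<omega>\<in>space M. dh1 \<omega> < dh2 \<omega>} + prob {\<omega>\<in>space M. dh1 \<omega> > dh2 \<omega>}"
      by (rule finite_measure_Union) auto
    moreover have "{\<omega>\<in>space M. dh1 \<omega> < dh2 \<omega>} \<union> {\<omega>\<in>space M. dh1 \<omega> > dh2 \<omega>}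
        = space M - {\<omega>\<in>space M. dh1 \<omega> = dh2 \<omega>}" by auto
    moreover have "prob (space M - {\<omega>\<in>space M. dh1 \<omega> = dh2 \<omega>}) = 1 - prob {\<omega>\<in>space M. dh1 \<omega> = dh2 \<omega>}"
      by (rule prob_compl) measurable
    ultimately show ?thesis using tie by simp
  qed
  define SA where "SA = {p\<in>space (borel \<Otimes>\<^sub>M borel). fst p < (snd p :: real)}"
  define SB where "SB = {p\<in>space (borel \<Otimes>\<^sub>M borel). c1 * fst p < c2 * (snd p :: real)}"
  define SA' where "SA' = {p\<in>space (borel \<Otimes>\<^sub>M borel). fst p > (snd p :: real)}"
  define SB' where "SB' = {p\<in>space (borel \<Otimes>\<^sub>M borel). c1 * fst p > c2 * (snd p :: real)}"
  have [measurable]: "SA \<in> sets (borel \<Otimes>\<^sub>M borel)" unfolding SA_def by measurable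
  have [measurable]: "SB \<in> sets (borel \<Otimes>\<^sub>M borel)" unfolding SB_def by measurable
  have [measurable]: "SA' \<in> sets (borel \<Otimes>\<^sub>M borel)" unfolding SA'_def by measurable
  have [measurable]: "SB' \<in> sets (borel \<Otimes>\<^sub>M borel)" unfolding SB'_def by measurable
  have T1: "prob {\<omega>\<in>space M. dh1 \<omega> < dh2 \<omega> \<and> c1 * E1 \<omega> < c2 * E2 \<omega>}
      = prob {\<omega>\<in>space M. dh1 \<omega> < dh2 \<omega>} * (c2 / (c1 + c2))"
  proof -
    have "prob {\<omega>\<in>space M. dh1 \<omega> < dh2 \<omega> \<and> c1 * E1 \<omega> < c2 * E2 \<omega>}
        = prob {\<omega>\<in>space M. (dh1 \<omega>, dh2 \<omega>) \<in> SA \<and> (E1 \<omega>, E2 \<omega>) \<in> SB}"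
      by (auto simp: SA_def SB_def space_pair_measure intro!: arg_cong[where f=prob])
    also have "\<dots> = prob {\<omega>\<in>space M. (dh1 \<omega>, dh2 \<omega>) \<in> SA} * prob {\<omega>\<in>space M. (E1 \<omega>, E2 \<omega>) \<in> SB}"
      by (rule indep_var_events[OF ind_PF]) measurable
    also have "{\<omega>\<in>space M. (dh1 \<omega>, dh2 \<omega>) \<in> SA} = {\<omega>\<in>space M. dh1 \<omega> < dh2 \<omega>}"
      by (auto simp: SA_def space_pair_measure)
    also have "{\<omega>\<in>space M. (E1 \<omega>, E2 \<omega>) \<in> SB} = {\<omega>\<in>space M. c1 * E1 \<omega> < c2 * E2 \<omega>}"
      by (auto simp: SB_def space_pair_measure)
    finally show ?thesis using fadeLT by simp
  qed
  have T2: "prob {\<omega>\<in>space M. dh1 \<omega> > dh2 \<omega> \<and> c1 * E1 \<omega> > c2 * E2 \<omega>}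
      = prob {\<omega>\<in>space M. dh1 \<omega> > dh2 \<omega>} * (c1 / (c1 + c2))"
  proof -
    have "prob {\<omega>\<in>space M. dh1 \<omega> > dh2 \<omega> \<and> c1 * E1 \<omega> > c2 * E2 \<omega>}
        = prob {\<omega>\<in>space M. (dh1 \<omega>, dh2 \<omega>) \<in> SA' \<and> (E1 \<omega>, E2 \<omega>) \<in> SB'}"
      by (auto simp: SA'_def SB'_def space_pair_measure intro!: arg_cong[where f=prob])
    also have "\<dots> = prob {\<omega>\<in>space M. (dh1 \<omega>, dh2 \<omega>) \<in> SA'} * prob {\<omega>\<in>space M. (E1 \<omega>, E2 \<omega>) \<in> SB'}"
      by (rule indep_var_events[OF ind_PF]) measurable
    also have "{\<omega>\<in>space M. (dh1 \<omega>, dh2 \<omega>) \<in> SA'} = {\<omega>\<in>space M. dh1 \<omega> > dh2 \<omega>}"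
      by (auto simp: SA'_def space_pair_measure)
    also have "{\<omega>\<in>space M. (E1 \<omega>, E2 \<omega>) \<in> SB'} = {\<omega>\<in>space M. c1 * E1 \<omega> > c2 * E2 \<omega>}"
      by (auto simp: SB'_def space_pair_measure)
    finally show ?thesis using fadeGT by simp
  qed
  have main: "prob {\<omega>\<in>space M. dh1 \<omega> < dh2 \<omega> \<and> (cmod (chan \<alpha> d1 (Complex (a1 \<omega>) (b1 \<omega>))))\<^sup>2 < (cmod (chan \<alpha> d2 (Complex (a2 \<omega>) (b2 \<omega>))))\<^sup>2}
      + prob {\<omega>\<in>space M. dh1 \<omega> > dh2 \<omega> \<and> (cmod (chan \<alpha> d1 (Complex (a1 \<omega>) (b1 \<omega>))))\<^sup>2 > (cmod (chan \<alpha> d2 (Complex (a2 \<omega>) (b2 \<omega>))))\<^sup>2}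
      = (D - 1) / (D + 1) * prob {\<omega>\<in>space M. dh1 \<omega> > dh2 \<omega>} + 1 / (D + 1)"
  proof -
    have cc: "0 < c1 + c2" using c1 c2 by simp
    have "prob {\<omega>\<in>space M. dh1 \<omega> < dh2 \<omega> \<and> (cmod (chan \<alpha> d1 (Complex (a1 \<omega>) (b1 \<omega>))))\<^sup>2 < (cmod (chan \<alpha> d2 (Complex (a2 \<omega>) (b2 \<omega>))))\<^sup>2}
      + prob {\<omega>\<in>space M. dh1 \<omega> > dh2 \<omega> \<and> (cmod (chan \<alpha> d1 (Complex (a1 \<omega>) (b1 \<omega>))))\<^sup>2 > (cmod (chan \<alpha> d2 (Complex (a2 \<omega>) (b2 \<omega>))))\<^sup>2}
      = (1 - prob {\<omega>\<in>space M. dh1 \<omega> > dh2 \<omega>}) * (c2 / (c1 + c2)) + prob {\<omega>\<in>space M. dh1 \<omega> > dh2 \<omega>} * (c1 / (c1 + c2))"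
      unfolding r1 r2 T1 T2 PLG ..
    also have "\<dots> = (D - 1) / (D + 1) * prob {\<omega>\<in>space M. dh1 \<omega> > dh2 \<omega>} + 1 / (D + 1)"
      unfolding D by (rule alg[OF c1 c2])
    finally show ?thesis .
  qed
  show ?thesis
    using main by (simp add: Let_def dh1_def dh2_def d1_def d2_def D_def)
qed

end
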